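(* Let $\{\rho_n\}_{n\ge1}$ be probability densities on $\mathbb{R}$ with $\rho_n\ge0$, $\int\rho_n=1$ and $\lim_{n\to\infty}\int_{|t|>\delta}\rho_n(t)\,dt=0$ for all $\delta>0$; for $v\in\mathbb{R}^N$ let $D_{n,v}w(x)=\int_{\mathbb{R}}\frac{w(x+tv)-w(x)}{t}\rho_n(t)\,dt$, and for a multi-index $\bar n=(n_1,\dots,n_N)$ let $\nabla_{\bar n}w(x)\in\mathbb{R}^N$ have components $D_{n_i,e_i}w(x)$ ($e_i$ the standard basis). Let $u\in C^1(\mathbb{R}^N)$, $x_0\in\mathbb{R}^N$, $R>0$, and let $\tilde u$ (obtained from $u$ via a smooth cutoff function) satisfy $\tilde u=u$ on the ball $B_R(x_0)$ and $\tilde u=0$ outside a compact set $K\supset B_R(x_0)$, with $\tilde u\in C^1_0(\mathbb{R}^N)$. Define $$r(x,x_0)=\tilde u(x)-\tilde u(x_0)-(x-x_0)^T\nabla u(x_0),\qquad r_{\bar n}(x,x_0)=\tilde u(x)-\tilde u(x_0)-(x-x_0)^T\nabla_{\bar n}\tilde u(x_0).$$ Then $r_{\bar n}(\cdot,x_0)\to r(\cdot,x_0)$ uniformly on $B_R(x_0)$ as $\min(\bar n)\to\infty$. Consequently the nonlocal Taylor approximant $A_{\bar n}(x)=\tilde u(x_0)+(x-x_0)^T\nabla_{\bar n}\tilde u(x_0)$ converges to the standard Taylor approximant $A(x)=\tilde u(x_0)+(x-x_0)^T\nabla u(x_0)$ uniformly on $B_R(x_0)$ as $\min(\bar n)\t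o\infty$.
   Context: $\min(\bar n)=\min_i n_i$. *)

theory Defs
  imports "HOL-Analysis.Analysis"
begin

definition nl_deriv ::
  "(nat \<Rightarrow> real \<Rightarrow> real) \<Rightarrow> nat \<Rightarrow> real^'n \<Rightarrow> (real^'n \<Rightarrow> real) \<Rightarrow> real^'n \<Rightarrow> real" where
  "nl_deriv \<rho> n v w x = (LINT t|lborel. ((w (x + t *\<^sub>R v) - w x) / t) * \<rho> n t)"

definition nl_grad ::
  "(nat \<Rightarrow> real \<Rightarrow> real) \<Rightarrow> ('n::finite \<Rightarrow> nat) \<Rightarrow> (real^'n \<Rightarrow> real) \<Rightarrow> real^'n \<Rightarrow> real^'n" where
  "nl_grad \<rho> nb w x = (\<chi> i. nl_deriv \<rho> (nb i) (axis i 1) w x)"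

end

theory Submission
  imports Defs
begin

lemma key1:
  fixes \<rho> :: "nat \<Rightarrow> real \<Rightarrow> real" and f :: "real \<Rightarrow> real"
  assumes rho_meas: "\<And>n. n \<ge> 1 \<Longrightarrow> \<rho> n \<in> borel_measurable lborel"
    and rho_nonneg: "\<And>n t. n \<ge> 1 \<Longrightarrow> \<rho> n t \<ge> 0"
    and rho_int: "\<And>n. n \<ge> 1 \<Longrightarrow> integrable lborel (\<rho> n)"
    and rho_one: "\<And>n. n \<ge> 1 \<Longrightarrow> (LINT t|lborel. \<rho> n t) = 1"
    and rho_tail: "\<And>\<delta>. \<delta> > 0 \<Longrightarrow>
          (\<lambda>n. LINT t:{t. \<delta> < \<bar>t\<bar>}|lborel. \<rho> n t) \<longlonglongrightarrow> 0"
    and fc: "continuous_on UNIV f"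
    and lip: "\<And>t. \<bar>f t - f 0\<bar> \<le> L * \<bar>t\<bar>"
    and der: "(f has_real_derivative d) (at 0)"
  shows "(\<lambda>n. LINT t|lborel. ((f t - f 0) / t) * \<rho> n t) \<longlonglongrightarrow> d"
proof (rule LIMSEQ_I)
  fix \<epsilon> :: real assume ep: "\<epsilon> > 0"
  define q where "q t = (f t - f 0) / t" for t
  have L0: "L \<ge> 0" using lip[of 1] by simp
  have qb: "\<bar>q t\<bar> \<le> L" for t
    using lip[of t] L0 by (cases "t = 0") (auto simp: q_def divide_simps abs_mult)
  have qm: "q \<in> borel_measurable lborel"
    unfolding q_def using fc
    by (intro borel_measurable_divide borel_measurable_diff borel_measurable_const)
       (auto intro: borel_measurable_continuous_onI)
  have "((\<lambda>t. q t) \<longlongrightarrow> d) (at 0)"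
    using der unfolding has_field_derivative_iff q_def by simp
  hence "\<forall>e>0. \<exists>da>0. \<forall>x\<in>UNIV. x \<noteq> 0 \<and> dist x 0 < da \<longrightarrow> dist (q x) d < e"
    unfolding tendsto_iff eventually_at by simp
  hence "\<exists>da>0. \<forall>x\<in>UNIV. x \<noteq> 0 \<and> dist x 0 < da \<longrightarrow> dist (q x) d < \<epsilon>/2"
    using ep by (meson half_gt_zero)
  then obtain \<delta> where dpos: "\<delta> > 0" and dq: "\<And>t. t \<noteq> 0 \<Longrightarrow> dist t 0 < \<delta> \<Longrightarrow> dist (q t) d < \<epsilon>/2"
    by blast
  define C where "C = L + \<bar>d\<bar> + 1"
  have Cpos: "C > 0" using L0 unfolding C_def by simp
  define T where "T n = (LINT t:{t. \<delta>/2 < \<bar>t\<bar>}|lborel. \<rho> n t)" for n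
  have "eventually (\<lambda>n. T n < \<epsilon> / (2*C)) sequentially"
    using rho_tail[of "\<delta>/2"] dpos ep Cpos unfolding T_def
    by (intro order_tendstoD(2)) auto
  then obtain N where N: "\<And>n. n \<ge> N \<Longrightarrow> T n < \<epsilon> / (2*C)"
    unfolding eventually_sequentially by blast
  show "\<exists>no. \<forall>n\<ge>no. norm ((LINT t|lborel. (f t - f 0) / t * \<rho> n t) - d) < \<epsilon>"
  proof (intro exI[of _ "max N 1"] allI impI)
    fix n assume n: "n \<ge> max N 1"
    hence n1: "n \<ge> 1" by simp
    have ir: "integrable lborel (\<rho> n)" using rho_int n1 by simp
    have iq: "integrable lborel (\<lambda>t. q t * \<rho> n t)"
    proof (rule Bochner_Integration.integrable_bound[OF integrable_mult_right[OF ir, of L]])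
      show "(\<lambda>t. q t * \<rho> n t) \<in> borel_measurable lborel" using qm rho_meas[OF n1] by measurable
      show "AE t in lborel. norm (q t * \<rho> n t) \<le> norm (L * \<rho> n t)"
        using qb rho_nonneg[OF n1] L0 by (auto simp: abs_mult intro!: mult_right_mono)
    qed
    have ig: "integrable lborel (\<lambda>t. (q t - d) * \<rho> n t)"
      using iq ir by (simp add: left_diff_distrib)
    have eq: "(LINT t|lborel. q t * \<rho> n t) - d = (LINT t|lborel. (q t - d) * \<rho> n t)"
      using iq ir rho_one[OF n1] by (simp add: left_diff_distrib)
    define A where "A = {t::real. \<delta>/2 < \<bar>t\<bar>}"
    have Am: "A \<in> sets lborel" unfolding A_def by measurable
    have iA: "integrable lborel (\<lambda>t. indicator A t * \<rho> n t)"
      using integrable_mult_indicator[OF Am ir] by simp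
    have TA: "T n = (LINT t|lborel. indicator A t * \<rho> n t)"
      unfolding T_def A_def set_lebesgue_integral_def by simp
    have "\<bar>LINT t|lborel. (q t - d) * \<rho> n t\<bar> \<le> (LINT t|lborel. \<bar>(q t - d) * \<rho> n t\<bar>)"
      by (rule integral_abs_bound)
    also have "\<dots> \<le> (LINT t|lborel. (\<epsilon>/2) * \<rho> n t + C * (indicator A t * \<rho> n t))"
    proof (rule integral_mono_AE)
      show "integrable lborel (\<lambda>t. \<bar>(q t - d) * \<rho> n t\<bar>)" using ig by simp
      show "integrable lborel (\<lambda>t. \<epsilon> / 2 * \<rho> n t + C * (indicator A t * \<rho> n t))"
        using ir iA by simp
      show "AE t in lborel. \<bar>(q t - d) * \<rho> n t\<bar> \<le> \<epsilon> / 2 * \<rho> n t + C * (indicator A t * \<rho> n t)"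
        using AE_lborel_singleton[of 0]
      proof eventually_elim
        case (elim t)
        have r0: "\<rho> n t \<ge> 0" using rho_nonneg[OF n1] by simp
        show ?case
        proof (cases "t \<in> A")
          case True
          have "\<bar>q t - d\<bar> \<le> C" using qb[of t] unfolding C_def by linarith
          hence "\<bar>(q t - d) * \<rho> n t\<bar> \<le> C * \<rho> n t" using r0 by (simp add: abs_mult mult_right_mono)
          moreover have "0 \<le> \<epsilon> * \<rho> n t / 2" using r0 ep by simp
          ultimately show ?thesis using True by simp
        next
          case False
          hence "\<bar>t\<bar> < \<delta>" using dpos unfolding A_def by auto
          hence "\<bar>q t - d\<bar> < \<epsilon>/2" using dq[of t] elim by (simp add: dist_real_def)
          hence "\<bar>(q t - d) * \<rho> n t\<bar> \<le> \<epsilon>/2 * \<rho> n t" using r0 mult_right_mono[of "\<bar>q t - d\<bar>" "\<epsilon>/2" "\<rho> n t"] by (simp add: abs_mult)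
          then show ?thesis using False by simp
        qed
      qed
    qed
    also have "\<dots> = \<epsilon>/2 + C * T n"
      using ir iA rho_one[OF n1] TA by simp
    also have "\<dots> < \<epsilon>/2 + C * (\<epsilon> / (2*C))"
      using mult_strict_left_mono[OF N[of n] Cpos] n by simp
    also have "\<dots> = \<epsilon>" using Cpos by simp
    finally show "norm ((LINT t|lborel. (f t - f 0) / t * \<rho> n t) - d) < \<epsilon>"
      using eq unfolding q_def by simp
  qed
qed


theorem theorem7:
  fixes \<rho> :: "nat \<Rightarrow> real \<Rightarrow> real"
    and u ut :: "real^'n \<Rightarrow> real"
    and Du Dut :: "real^'n \<Rightarrow> real^'n"
    and x0 :: "real^'n" and R :: real and K :: "(real^'n) set"
  assumes rho_meas: "\<And>n. n \<ge> 1 \<Longrightarrow> \<rho> n \<in> borel_measurable lborel"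
    and rho_nonneg: "\<And>n t. n \<ge> 1 \<Longrightarrow> \<rho> n t \<ge> 0"
    and rho_int: "\<And>n. n \<ge> 1 \<Longrightarrow> integrable lborel (\<rho> n)"
    and rho_one: "\<And>n. n \<ge> 1 \<Longrightarrow> (LINT t|lborel. \<rho> n t) = 1"
    and rho_tail: "\<And>\<delta>. \<delta> > 0 \<Longrightarrow>
          (\<lambda>n. LINT t:{t. \<delta> < \<bar>t\<bar>}|lborel. \<rho> n t) \<longlonglongrightarrow> 0"
    and u_C1: "\<And>x. (u has_derivative (\<lambda>h. Du x \<bullet> h)) (at x)"
    and u_C1_cont: "continuous_on UNIV Du"
    and R_pos: "R > 0"
    and ut_C1: "\<And>x. (ut has_derivative (\<lambda>h. Dut x \<bullet> h)) (at x)"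
    and ut_C1_cont: "continuous_on UNIV Dut"
    and K_compact: "compact K"
    and K_ball: "ball x0 R \<subseteq> K"
    and ut_eq: "\<And>x. x \<in> ball x0 R \<Longrightarrow> ut x = u x"
    and ut_zero: "\<And>x. x \<notin> K \<Longrightarrow> ut x = 0"
  shows "(\<forall>\<epsilon>>0. \<exists>M. \<forall>nb :: 'n \<Rightarrow> nat. Min (range nb) \<ge> M \<longrightarrow>
            (\<forall>x\<in>ball x0 R.
               \<bar>(ut x - ut x0 - (x - x0) \<bullet> nl_grad \<rho> nb ut x0)
                 - (ut x - ut x0 - (x - x0) \<bullet> Du x0)\<bar> < \<epsilon>))
       \<and> (\<forall>\<epsilon>>0. \<exists>M. \<forall>nb :: 'n \<Rightarrow> nat. Min (range nb) \<ge> M \<longrightarrow>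
            (\<forall>x\<in>ball x0 R.
               \<bar>(ut x0 + (x - x0) \<bullet> nl_grad \<rho> nb ut x0)
                 - (ut x0 + (x - x0) \<bullet> Du x0)\<bar> < \<epsilon>))"
  proof -
  have Dx0: "Dut x0 = Du x0"
  proof -
    have "(ut has_derivative (\<lambda>h. Du x0 \<bullet> h)) (at x0)"
      by (rule has_derivative_transform_within_open[OF u_C1, of "ball x0 R"])
         (use R_pos ut_eq in auto)
    from has_derivative_unique[OF ut_C1 this]
    have "(\<lambda>h. Dut x0 \<bullet> h) = (\<lambda>h. Du x0 \<bullet> h)" .
    hence "Dut x0 \<bullet> (Dut x0 - Du x0) = Du x0 \<bullet> (Dut x0 - Du x0)" by meson
    hence "(Dut x0 - Du x0) \<bullet> (Dut x0 - Du x0) = 0" by (simp add: inner_diff_left inner_diff_right inner_commute)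
    thus ?thesis by simp
  qed
  have Dout: "Dut x = 0" if "x \<notin> K" for x
  proof -
    have "open (- K)" using K_compact compact_imp_closed by blast
    have "(ut has_derivative (\<lambda>h. 0)) (at x)"
      by (rule has_derivative_transform_within_open[of "\<lambda>_. 0" _ _ _ "- K"])
         (use that \<open>open (- K)\<close> ut_zero in auto)
    from has_derivative_unique[OF ut_C1 this]
    have "(\<lambda>h. Dut x \<bullet> h) = (\<lambda>h. 0)" .
    hence "Dut x \<bullet> Dut x = 0" by meson
    thus ?thesis by simp
  qed
  obtain B where B0: "B \<ge> 0" and B: "\<And>x. norm (Dut x) \<le> B"
  proof -
    have "compact (Dut ` K)"
      using K_compact ut_C1_cont by (intro compact_continuous_image) (auto intro: continuous_on_subset)
    then obtain B1 where B1: "\<And>y. y \<in> Dut ` K \<Longrightarrow> norm y \<le> B1"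
      using compact_imp_bounded bounded_iff by metis
    show ?thesis
    proof (rule that[of "max B1 0"])
      fix x show "norm (Dut x) \<le> max B1 0"
        using B1[of "Dut x"] Dout[of x] by (cases "x \<in> K") auto
    qed simp
  qed
  have lipu: "\<bar>ut y - ut x\<bar> \<le> B * norm (y - x)" for x y
  proof -
    have "norm (ut y - ut x) \<le> B * norm (y - x)"
    proof (rule differentiable_bound[of UNIV])
      fix z :: "real^'n"
      show "(ut has_derivative (\<lambda>h. Dut z \<bullet> h)) (at z within UNIV)" using ut_C1 by simp
      have "onorm (\<lambda>h. Dut z \<bullet> h) \<le> norm (Dut z) * onorm (\<lambda>h::real^'n. h)"
        by (rule onorm_inner_right) (rule bounded_linear_ident)
      thus "onorm (\<lambda>h. Dut z \<bullet> h) \<le> B" using B[of z] by (simp add: onorm_id)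
    qed auto
    thus ?thesis by simp
  qed
  have utc: "continuous_on UNIV ut"
    using ut_C1 has_derivative_continuous by (metis continuous_at_imp_continuous_on)
  have comp: "(\<lambda>n. nl_deriv \<rho> n (axis i 1) ut x0) \<longlonglongrightarrow> Du x0 $ i" for i
  proof -
    define f where "f t = ut (x0 + t *\<^sub>R axis i 1)" for t
    have "(\<lambda>n. LINT t|lborel. ((f t - f 0) / t) * \<rho> n t) \<longlonglongrightarrow> Dut x0 $ i"
    proof (rule key1[OF rho_meas rho_nonneg rho_int rho_one rho_tail])
      show "continuous_on UNIV f" unfolding f_def
        by (intro continuous_on_compose2[OF utc]) (auto intro!: continuous_intros)
      show "\<bar>f t - f 0\<bar> \<le> B * \<bar>t\<bar>" for t
        using lipu[of "x0 + t *\<^sub>R axis i 1" x0] by (simp add: f_def)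
      have d1: "((\<lambda>t. x0 + t *\<^sub>R axis i (1::real)) has_derivative (\<lambda>h. h *\<^sub>R axis i 1)) (at 0)"
        by (auto intro!: derivative_eq_intros)
      have "(f has_derivative (\<lambda>h. Dut x0 \<bullet> (h *\<^sub>R axis i 1))) (at 0)"
      proof -
        have "((\<lambda>t. ut ((\<lambda>t. x0 + t *\<^sub>R axis i (1::real)) t)) has_derivative (\<lambda>h. (\<lambda>h. Dut x0 \<bullet> h) (h *\<^sub>R axis i 1))) (at 0)"
          by (rule has_derivative_compose[OF d1]) (use ut_C1[of x0] in simp)
        thus ?thesis unfolding f_def[abs_def] by simp
      qed
      moreover have "(\<lambda>h. Dut x0 \<bullet> (h *\<^sub>R axis i 1)) = (*) (Dut x0 $ i)"
        by (auto simp: fun_eq_iff inner_axis)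
      ultimately show "(f has_real_derivative Dut x0 $ i) (at 0)"
        unfolding has_field_derivative_def by simp
    qed (auto)
    thus ?thesis using Dx0 unfolding nl_deriv_def f_def by simp
  qed
  have main: "\<forall>\<epsilon>>0. \<exists>M. \<forall>nb :: 'n \<Rightarrow> nat. Min (range nb) \<ge> M \<longrightarrow>
      (\<forall>x\<in>ball x0 R. \<bar>(x - x0) \<bullet> (nl_grad \<rho> nb ut x0 - Du x0)\<bar> < \<epsilon>)"
  proof (intro allI impI)
    fix \<epsilon> :: real assume ep: "\<epsilon> > 0"
    define \<eta> where "\<eta> = \<epsilon> / (R * real CARD('n))"
    have eta: "\<eta> > 0" unfolding \<eta>_def using ep R_pos by simp
    have "\<forall>i. \<exists>M. \<forall>n\<ge>M. \<bar>nl_deriv \<rho> n (axis i 1) ut x0 - Du x0 $ i\<bar> < \<eta>"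
      using comp eta by (metis LIMSEQ_D real_norm_def)
    then obtain Mf where Mf: "\<And>i n. n \<ge> Mf i \<Longrightarrow> \<bar>nl_deriv \<rho> n (axis i 1) ut x0 - Du x0 $ i\<bar> < \<eta>"
      by metis
    show "\<exists>M. \<forall>nb :: 'n \<Rightarrow> nat. Min (range nb) \<ge> M \<longrightarrow>
      (\<forall>x\<in>ball x0 R. \<bar>(x - x0) \<bullet> (nl_grad \<rho> nb ut x0 - Du x0)\<bar> < \<epsilon>)"
    proof (intro exI[of _ "Max (range Mf)"] allI impI ballI)
      fix nb :: "'n \<Rightarrow> nat" and x assume nb: "Min (range nb) \<ge> Max (range Mf)" and x: "x \<in> ball x0 R"
      have ge: "nb i \<ge> Mf i" for i
      proof -
        have "Mf i \<le> Max (range Mf)" by (rule Max_ge) auto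
        moreover have "Min (range nb) \<le> nb i" by (rule Min_le) auto
        ultimately show ?thesis using nb by linarith
      qed
      have "norm (nl_grad \<rho> nb ut x0 - Du x0) \<le> (\<Sum>i\<in>UNIV. \<bar>(nl_grad \<rho> nb ut x0 - Du x0) $ i\<bar>)"
        by (rule norm_le_l1_cart)
      also have "\<dots> < (\<Sum>i\<in>(UNIV::'n set). \<eta>)"
        by (rule sum_strict_mono) (auto simp: nl_grad_def intro: Mf ge)
      also have "\<dots> = \<epsilon> / R" unfolding \<eta>_def by simp
      finally have ng: "norm (nl_grad \<rho> nb ut x0 - Du x0) < \<epsilon> / R" .
      have "\<bar>(x - x0) \<bullet> (nl_grad \<rho> nb ut x0 - Du x0)\<bar> \<le> norm (x - x0) * norm (nl_grad \<rho> nb ut x0 - Du x0)"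
        by (rule Cauchy_Schwarz_ineq2)
      also have "\<dots> \<le> R * norm (nl_grad \<rho> nb ut x0 - Du x0)"
        using x by (intro mult_right_mono) (auto simp: dist_norm norm_minus_commute)
      also have "\<dots> < R * (\<epsilon> / R)" using mult_strict_left_mono[OF ng R_pos] .
      also have "\<dots> = \<epsilon>" using R_pos by simp
      finally show "\<bar>(x - x0) \<bullet> (nl_grad \<rho> nb ut x0 - Du x0)\<bar> < \<epsilon>" .
    qed
  qed
  show ?thesis
  proof (rule conjI)
    show "\<forall>\<epsilon>>0. \<exists>M. \<forall>nb :: 'n \<Rightarrow> nat. Min (range nb) \<ge> M \<longrightarrow>
            (\<forall>x\<in>ball x0 R.
               \<bar>(ut x - ut x0 - (x - x0) \<bullet> nl_grad \<rho> nb ut x0)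
                 - (ut x - ut x0 - (x - x0) \<bullet> Du x0)\<bar> < \<epsilon>)"
      using main by (simp add: inner_diff_right abs_minus_commute)
    show "\<forall>\<epsilon>>0. \<exists>M. \<forall>nb :: 'n \<Rightarrow> nat. Min (range nb) \<ge> M \<longrightarrow>
            (\<forall>x\<in>ball x0 R.
               \<bar>(ut x0 + (x - x0) \<bullet> nl_grad \<rho> nb ut x0)
                 - (ut x0 + (x - x0) \<bullet> Du x0)\<bar> < \<epsilon>)"
      using main by (simp add: inner_diff_right)
  qed
qed

end
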